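(* Let $F$ be a discrete time regulatory network on $[0,1]^d$ satisfying coordinatewise injectivity. Then for each $i\in\{1,\dots,d\}$ and each integer $t\ge1$, any two distinct members of $\mathcal Q_i^t$ are disjoint.
   Context: $K\in[0,1]^{d\times d}$ with $\sum_iK_{i,j}=1$ for each $j$; $s\in\{-1,0,1\}^{d\times d}$, $T\in[0,1]^{d\times d}$ with $s_{i,j}=0$ iff $K_{i,j}=0$ and $T_{i,j}=0$ iff $K_{i,j}=0$; $a\in[0,1]$; $H(x)=0$ for $x\le0$, $1$ otherwise; $F(x)_j=ax_j+(1-a)\sum_iK_{i,j}H(s_{i,j}(x_i-T_{i,j}))$. Coordinatewise injectivity: for each $j$, with $\mathcal F_j=\{x\mapsto ax+(1-a)\sum_i\epsilon_iK_{i,j}:\epsilon\in\{0,1\}^d\}$, distinct $f,f'\in\mathcal F_j$ have $f([0,1])\cap f'([0,1])=\emptyset$. Base partition: $\mathcal P_i$ is the set of nonempty level sets of $u\mapsto(H(s_{i,k}(u-T_{i,k})))_{k=1}^d$ on $[0,1]$, $\mathcal P=\{\prod_iI_i:I_i\in\mathcal P_i\}$; $\mathcal P^1=\mathcal P$, $\mathcal P^{t+1}=\{F^{-1}(\mathbf I)\cap\mathbf J\ne\emptyset:\mathbf I\in\mathcal P^t,\mathbf J\in\mathcal P\}$. Set $\mathcal Q^t=\{F^{t-1}(\mathbf I):\mathbf I\in\mathcal P^t\}$ and $\mathcal Q_i^t=\{\Pi_i\mathbf J:\mathbf J\in\mathcal Q^t\}$, where $\Pi_i$ is the projection onto the $i$-th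 coordinate. *)

theory Defs
  imports Complex_Main "HOL-Library.FuncSet"
begin

text \<open>Coordinates are indexed by a finite type 'n (so d = CARD('n)); points of [0,1]^d
are functions 'n \<Rightarrow> real with all values in [0,1].\<close>

definition heav :: "real \<Rightarrow> real" where
  "heav x = (if x \<le> 0 then 0 else 1)"

definition cube :: "('n::finite \<Rightarrow> real) set" where
  "cube = {x. \<forall>i. x i \<in> {0..1}}"

definition netF :: "('n::finite \<Rightarrow> 'n \<Rightarrow> real) \<Rightarrow> ('n \<Rightarrow> 'n \<Rightarrow> real) \<Rightarrow>
    ('n \<Rightarrow> 'n \<Rightarrow> real) \<Rightarrow> real \<Rightarrow> ('n \<Rightarrow> real) \<Rightarrow> ('n \<Rightarrow> real)" where
  "netF K s T a x = (\<lambda>j. a * x j + (1 - a) * (\<Sum>i\<in>UNIV. K i j * heav (s i j * (x i - T i j))))"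

definition regulatory_network ::
  "('n::finite \<Rightarrow> 'n \<Rightarrow> real) \<Rightarrow> ('n \<Rightarrow> 'n \<Rightarrow> real) \<Rightarrow> ('n \<Rightarrow> 'n \<Rightarrow> real) \<Rightarrow> real \<Rightarrow> bool" where
  "regulatory_network K s T a \<longleftrightarrow>
     (\<forall>i j. K i j \<in> {0..1}) \<and> (\<forall>j. (\<Sum>i\<in>UNIV. K i j) = 1) \<and>
     (\<forall>i j. s i j \<in> {-1, 0, 1}) \<and> (\<forall>i j. T i j \<in> {0..1}) \<and>
     (\<forall>i j. s i j = 0 \<longleftrightarrow> K i j = 0) \<and> (\<forall>i j. T i j = 0 \<longleftrightarrow> K i j = 0) \<and>
     a \<in> {0..1}"

definition coordF :: "('n::finite \<Rightarrow> 'n \<Rightarrow> real) \<Rightarrow> real \<Rightarrow> 'n \<Rightarrow> ('n \<Rightarrow> real) \<Rightarrow> real \<Rightarrow> real" where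
  "coordF K a j \<epsilon> = (\<lambda>x. a * x + (1 - a) * (\<Sum>i\<in>UNIV. \<epsilon> i * K i j))"

definition coordinatewise_injective :: "('n::finite \<Rightarrow> 'n \<Rightarrow> real) \<Rightarrow> real \<Rightarrow> bool" where
  "coordinatewise_injective K a \<longleftrightarrow>
     (\<forall>j \<epsilon> \<epsilon>'. (\<forall>i. \<epsilon> i \<in> {0, 1}) \<longrightarrow> (\<forall>i. \<epsilon>' i \<in> {0, 1}) \<longrightarrow>
        coordF K a j \<epsilon> \<noteq> coordF K a j \<epsilon>' \<longrightarrow>
        coordF K a j \<epsilon> ` {0..1} \<inter> coordF K a j \<epsilon>' ` {0..1} = {})"

definition base_part_coord :: "('n::finite \<Rightarrow> 'n \<Rightarrow> real) \<Rightarrow> ('n \<Rightarrow> 'n \<Rightarrow> real) \<Rightarrow> 'n \<Rightarrow> real set set" where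
  "base_part_coord s T i =
     {L. \<exists>v\<in>{0..1}. L = {u\<in>{0..1}. (\<lambda>k. heav (s i k * (u - T i k))) = (\<lambda>k. heav (s i k * (v - T i k)))}}"

definition base_part :: "('n::finite \<Rightarrow> 'n \<Rightarrow> real) \<Rightarrow> ('n \<Rightarrow> 'n \<Rightarrow> real) \<Rightarrow> ('n \<Rightarrow> real) set set" where
  "base_part s T = {Pi UNIV I | I. \<forall>i. I i \<in> base_part_coord s T i}"

text \<open>partP K s T a t = \<P>^t for t \<ge> 1 (the value at t = 0 is irrelevant).\<close>
fun partP :: "('n::finite \<Rightarrow> 'n \<Rightarrow> real) \<Rightarrow> ('n \<Rightarrow> 'n \<Rightarrow> real) \<Rightarrow> ('n \<Rightarrow> 'n \<Rightarrow> real) \<Rightarrow> real \<Rightarrow>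
    nat \<Rightarrow> ('n \<Rightarrow> real) set set" where
  "partP K s T a 0 = {}"
| "partP K s T a (Suc 0) = base_part s T"
| "partP K s T a (Suc (Suc n)) =
     {netF K s T a -` I \<inter> J | I J. I \<in> partP K s T a (Suc n) \<and> J \<in> base_part s T
        \<and> netF K s T a -` I \<inter> J \<noteq> {}}"

definition partQ :: "('n::finite \<Rightarrow> 'n \<Rightarrow> real) \<Rightarrow> ('n \<Rightarrow> 'n \<Rightarrow> real) \<Rightarrow> ('n \<Rightarrow> 'n \<Rightarrow> real) \<Rightarrow> real \<Rightarrow>
    nat \<Rightarrow> ('n \<Rightarrow> real) set set" where
  "partQ K s T a t = {(netF K s T a ^^ (t - 1)) ` I | I. I \<in> partP K s T a t}"

definition partQ_coord :: "('n::finite \<Rightarrow> 'n \<Rightarrow> real) \<Rightarrow> ('n \<Rightarrow> 'n \<Rightarrow> real) \<Rightarrow> ('n \<Rightarrow> 'n \<Rightarrow> real) \<Rightarrow> real \<Rightarrow>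
    nat \<Rightarrow> 'n \<Rightarrow> real set set" where
  "partQ_coord K s T a t i = {(\<lambda>x. x i) ` J | J. J \<in> partQ K s T a t}"

end

theory Submission
  imports Defs
begin

fun cyl :: "('a \<Rightarrow> 'a) \<Rightarrow> 'a set list \<Rightarrow> 'a set" where
  "cyl F [] = UNIV"
| "cyl F (J # js) = J \<inter> F -` cyl F js"

lemma cyl_snoc: "cyl F (js @ [J]) = cyl F js \<inter> (F ^^ length js) -` J"
  by (induction js) (auto simp: funpow_swap1)

lemma base_ne: "J \<in> base_part s T \<Longrightarrow> J \<noteq> {}"
proof -
  assume "J \<in> base_part s T"
  then obtain I where J: "J = Pi UNIV I" and I: "\<forall>i. I i \<in> base_part_coord s T i"
    unfolding base_part_def by auto
  have "\<forall>i. I i \<noteq> {}"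
  proof
    fix i
    from I obtain v where "v \<in> {0..1}" "I i = {u\<in>{0..1}. (\<lambda>k. heav (s i k * (u - T i k))) = (\<lambda>k. heav (s i k * (v - T i k)))}"
      unfolding base_part_coord_def by blast
    then show "I i \<noteq> {}" by auto
  qed
  then show ?thesis using J by (auto simp: Pi_eq_empty)
qed

lemma base_cube: "J \<in> base_part s T \<Longrightarrow> x \<in> J \<Longrightarrow> x i \<in> {0..1}"
  unfolding base_part_def base_part_coord_def by (auto simp: Pi_def)

lemma partP_char:
  "partP K s T a (Suc n) = {cyl (netF K s T a) js | js. length js = Suc n \<and> set js \<subseteq> base_part s T
      \<and> cyl (netF K s T a) js \<noteq> {}}"
proof (induction n)
  case 0
  show ?case
  proof (intro set_eqI iffI)
    fix x assume "x \<in> partP K s T a (Suc 0)"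
    then show "x \<in> {cyl (netF K s T a) js | js. length js = Suc 0 \<and> set js \<subseteq> base_part s T
      \<and> cyl (netF K s T a) js \<noteq> {}}"
      using base_ne[of x s T] by (auto intro!: exI[of _ "[x]"])
  next
    fix x assume "x \<in> {cyl (netF K s T a) js | js. length js = Suc 0 \<and> set js \<subseteq> base_part s T
      \<and> cyl (netF K s T a) js \<noteq> {}}"
    then show "x \<in> partP K s T a (Suc 0)" by (auto simp: length_Suc_conv)
  qed
next
  case (Suc n)
  show ?case
  proof (intro set_eqI iffI)
    fix x assume "x \<in> partP K s T a (Suc (Suc n))"
    then obtain I J where x: "x = netF K s T a -` I \<inter> J" and I: "I \<in> partP K s T a (Suc n)"
      and J: "J \<in> base_part s T" and ne: "netF K s T a -` I \<inter> J \<noteq> {}" by auto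
    from I Suc obtain js where js: "I = cyl (netF K s T a) js" "length js = Suc n" "set js \<subseteq> base_part s T"
      by auto
    show "x \<in> {cyl (netF K s T a) js | js. length js = Suc (Suc n) \<and> set js \<subseteq> base_part s T
      \<and> cyl (netF K s T a) js \<noteq> {}}"
      using x js J ne by (auto intro!: exI[of _ "J # js"])
  next
    fix x assume "x \<in> {cyl (netF K s T a) js | js. length js = Suc (Suc n) \<and> set js \<subseteq> base_part s T
      \<and> cyl (netF K s T a) js \<noteq> {}}"
    then obtain J js where x: "x = cyl (netF K s T a) (J # js)" "length js = Suc n" "J \<in> base_part s T"
      "set js \<subseteq> base_part s T" "cyl (netF K s T a) (J # js) \<noteq> {}"
    proof -
      from \<open>x \<in> _\<close> obtain ks where ks: "x = cyl (netF K s T a) ks" "length ks = Suc (Suc n)"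
        "set ks \<subseteq> base_part s T" "cyl (netF K s T a) ks \<noteq> {}" by blast
      then obtain J js where "ks = J # js" by (cases ks) auto
      with ks show ?thesis using that by auto
    qed
    then have "cyl (netF K s T a) js \<noteq> {}" by auto
    with x Suc have "cyl (netF K s T a) js \<in> partP K s T a (Suc n)" by auto
    moreover have "x = netF K s T a -` cyl (netF K s T a) js \<inter> J" using x by auto
    ultimately show "x \<in> partP K s T a (Suc (Suc n))" using x
      unfolding partP.simps by blast
  qed
qed


lemma partQ_base: "partQ K s T a (Suc 0) = base_part s T"
  unfolding partQ_def by auto

lemma partQ_step:
  assumes "A \<in> partQ K s T a (Suc (Suc n))"
  shows "\<exists>Q J. Q \<in> partQ K s T a (Suc n) \<and> J \<in> base_part s T \<and> A = netF K s T a ` Q \<inter> J \<and> A \<noteq> {}"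
proof -
  define F where "F = netF K s T a"
  from assms obtain I where A: "A = (F ^^ Suc n) ` I" and I: "I \<in> partP K s T a (Suc (Suc n))"
    unfolding partQ_def F_def by (simp del: partP.simps) blast
  from I obtain ks where ks: "I = cyl F ks" "length ks = Suc (Suc n)" "set ks \<subseteq> base_part s T"
    "cyl F ks \<noteq> {}" unfolding partP_char F_def by blast
  obtain js J where kjs: "ks = js @ [J]" using ks(2) by (cases ks rule: rev_exhaust) auto
  have ljs: "length js = Suc n" using ks(2) kjs by auto
  have cy: "cyl F ks = cyl F js \<inter> (F ^^ Suc n) -` J" using kjs cyl_snoc[of F js J] ljs by simp
  have "cyl F js \<noteq> {}" using ks(4) cy by auto
  then have "cyl F js \<in> partP K s T a (Suc n)" unfolding partP_char F_def
    using ljs ks(3) kjs by auto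
  then have Q: "(F ^^ n) ` cyl F js \<in> partQ K s T a (Suc n)" unfolding partQ_def F_def by auto
  have J: "J \<in> base_part s T" using ks(3) kjs by auto
  have "A = (F ^^ Suc n) ` cyl F js \<inter> J" unfolding A ks(1) cy by auto
  also have "\<dots> = F ` ((F ^^ n) ` cyl F js) \<inter> J" by (simp add: image_comp)
  finally have "A = F ` ((F ^^ n) ` cyl F js) \<inter> J" .
  moreover have "A \<noteq> {}" using A ks by auto
  ultimately show ?thesis using Q J unfolding F_def by blast
qed

lemma partQ_sub: "A \<in> partQ K s T a (Suc n) \<Longrightarrow> \<exists>L \<in> base_part s T. A \<subseteq> L \<and> A \<noteq> {}"
proof (cases n)
  case 0
  assume "A \<in> partQ K s T a (Suc n)"
  then have "A \<in> base_part s T" using 0 partQ_base by metis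
  then show ?thesis using base_ne by blast
next
  case (Suc m)
  assume "A \<in> partQ K s T a (Suc n)"
  then obtain Q J where "J \<in> base_part s T" "A = netF K s T a ` Q \<inter> J" "A \<noteq> {}"
    using Suc partQ_step[of A K s T a m] by auto
  then show ?thesis by blast
qed

lemma proj_Pi: "Pi UNIV X \<noteq> {} \<Longrightarrow> (\<lambda>x. x i) ` Pi UNIV X = X i"
proof
  assume ne: "Pi UNIV X \<noteq> {}"
  show "(\<lambda>x. x i) ` Pi UNIV X \<subseteq> X i" by auto
  show "X i \<subseteq> (\<lambda>x. x i) ` Pi UNIV X"
  proof
    fix u assume u: "u \<in> X i"
    from ne obtain x0 where "x0 \<in> Pi UNIV X" by blast
    then have "x0(i := u) \<in> Pi UNIV X" using u by auto
    then show "u \<in> (\<lambda>x. x i) ` Pi UNIV X" by (metis (no_types, lifting) fun_upd_same image_eqI)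
  qed
qed

lemma img_prod:
  assumes "\<forall>x \<in> Pi UNIV X. \<forall>j. G x j = \<phi> j (x j)"
  shows "G ` Pi UNIV X = Pi UNIV (\<lambda>j. \<phi> j ` X j)"
proof
  show "G ` Pi UNIV X \<subseteq> Pi UNIV (\<lambda>j. \<phi> j ` X j)" using assms by auto
  show "Pi UNIV (\<lambda>j. \<phi> j ` X j) \<subseteq> G ` Pi UNIV X"
  proof
    fix y assume "y \<in> Pi UNIV (\<lambda>j. \<phi> j ` X j)"
    then have "\<forall>j. \<exists>u. u \<in> X j \<and> y j = \<phi> j u" by auto
    then obtain x where x: "\<forall>j. x j \<in> X j \<and> y j = \<phi> j (x j)" by metis
    then have "x \<in> Pi UNIV X" by auto
    moreover have "G x = y" using x assms \<open>x \<in> Pi UNIV X\<close> by (intro ext) auto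
    ultimately show "y \<in> G ` Pi UNIV X" by auto
  qed
qed

lemma base_decomp: "L \<in> base_part s T \<Longrightarrow> \<exists>Lc. L = Pi UNIV Lc \<and> (\<forall>i. Lc i \<in> base_part_coord s T i)"
  unfolding base_part_def by auto

lemma bpc_disj: "X \<in> base_part_coord s T i \<Longrightarrow> Y \<in> base_part_coord s T i \<Longrightarrow> X \<inter> Y \<noteq> {} \<Longrightarrow> X = Y"
  unfolding base_part_coord_def by auto

lemma base_coordF:
  assumes "L \<in> base_part s T"
  shows "\<exists>e. (\<forall>j k. e j k \<in> {0,1}) \<and> (\<forall>x\<in>L. \<forall>j. netF K s T a x j = coordF K a j (e j) (x j))"
proof -
  from assms obtain I where L: "L = Pi UNIV I" and I: "\<forall>i. I i \<in> base_part_coord s T i"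
    unfolding base_part_def by auto
  have "\<forall>i. \<exists>v. I i = {u\<in>{0..1}. (\<lambda>k. heav (s i k * (u - T i k))) = (\<lambda>k. heav (s i k * (v - T i k)))}"
    using I unfolding base_part_coord_def by blast
  then have "\<exists>v. \<forall>i. I i = {u\<in>{0..1}. (\<lambda>k. heav (s i k * (u - T i k))) = (\<lambda>k. heav (s i k * (v i - T i k)))}"
    by (rule choice)
  then obtain v where v: "\<forall>i. I i = {u\<in>{0..1}. (\<lambda>k. heav (s i k * (u - T i k))) = (\<lambda>k. heav (s i k * (v i - T i k)))}"
    by (elim exE)
  define e where "e = (\<lambda>j i'. heav (s i' j * (v i' - T i' j)))"
  have "\<forall>j k. e j k \<in> {0,1}" unfolding e_def heav_def by auto
  moreover have "\<forall>x\<in>L. \<forall>j. netF K s T a x j = coordF K a j (e j) (x j)"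
  proof (intro ballI allI)
    fix x j assume "x \<in> L"
    then have "\<forall>i. x i \<in> I i" using L by auto
    then have fe: "\<forall>i. (\<lambda>k. heav (s i k * (x i - T i k))) = (\<lambda>k. heav (s i k * (v i - T i k)))"
      using v by blast
    have h: "\<forall>i. heav (s i j * (x i - T i j)) = e j i"
    proof
      fix i
      from fun_cong[OF spec[OF fe, of i], of j] show "heav (s i j * (x i - T i j)) = e j i"
        unfolding e_def by simp
    qed
    show "netF K s T a x j = coordF K a j (e j) (x j)"
      unfolding netF_def coordF_def by (simp add: h mult.commute)
  qed
  ultimately show ?thesis by blast
qed


lemma step_desc:
  assumes A: "A \<in> partQ K s T a (Suc (Suc n))"
    and prodIH: "\<forall>Q \<in> partQ K s T a (Suc n). \<exists>Qc. Q = Pi UNIV Qc"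
  shows "\<exists>Q Qc Jc e. Q \<in> partQ K s T a (Suc n) \<and> Q = Pi UNIV Qc \<and> Q \<noteq> {}
    \<and> (\<forall>j. Jc j \<in> base_part_coord s T j) \<and> (\<forall>j k. e j k \<in> {0,1}) \<and> (\<forall>j. Qc j \<subseteq> {0..1})
    \<and> A = Pi UNIV (\<lambda>j. coordF K a j (e j) ` Qc j \<inter> Jc j) \<and> A \<noteq> {}"
proof -
  obtain Q J where Q: "Q \<in> partQ K s T a (Suc n)" and J: "J \<in> base_part s T"
    and AQ: "A = netF K s T a ` Q \<inter> J" and Ane: "A \<noteq> {}" using partQ_step[OF A] by blast
  obtain Qc where Qc: "Q = Pi UNIV Qc" using prodIH Q by blast
  obtain L where L: "L \<in> base_part s T" "Q \<subseteq> L" "Q \<noteq> {}" using partQ_sub[OF Q] by blast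
  obtain e where e: "\<forall>j k. e j k \<in> {0,1}" "\<forall>x\<in>L. \<forall>j. netF K s T a x j = coordF K a j (e j) (x j)"
    using base_coordF[OF L(1), of K a] by blast
  obtain Jc where Jc: "J = Pi UNIV Jc" "\<forall>j. Jc j \<in> base_part_coord s T j" using base_decomp[OF J] by blast
  have img: "netF K s T a ` Q = Pi UNIV (\<lambda>j. coordF K a j (e j) ` Qc j)" unfolding Qc
    by (rule img_prod) (use e(2) L(2) Qc in blast)
  have Aeq: "A = Pi UNIV (\<lambda>j. coordF K a j (e j) ` Qc j \<inter> Jc j)" unfolding AQ img Jc(1) by auto
  have "\<forall>j. Qc j \<subseteq> {0..1}"
  proof (intro allI subsetI)
    fix j u assume u: "u \<in> Qc j"
    have "(\<lambda>x. x j) ` Q = Qc j" unfolding Qc by (rule proj_Pi) (use L(3) Qc in blast)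
    then have "u \<in> (\<lambda>x. x j) ` Q" using u by simp
    then obtain x where "x \<in> Q" "x j = u" by blast
    then show "u \<in> {0..1}" using L(1,2) base_cube by blast
  qed
  then show ?thesis using Q Qc L(3) Jc(2) e(1) Aeq Ane by blast
qed

lemma partQ_prod: "A \<in> partQ K s T a (Suc n) \<Longrightarrow> \<exists>Ac. A = Pi UNIV Ac"
proof (induction n arbitrary: A)
  case 0
  then show ?case using partQ_base base_decomp by metis
next
  case (Suc n)
  then show ?case using step_desc[OF Suc.prems] by blast
qed

lemma partQ_disj:
  assumes inj: "coordinatewise_injective K a"
  shows "\<forall>Q\<in>partQ K s T a (Suc n). \<forall>Q'\<in>partQ K s T a (Suc n). \<forall>i.
     (\<lambda>x. x i) ` Q \<inter> (\<lambda>x. x i) ` Q' \<noteq> {} \<longrightarrow> (\<lambda>x. x i) ` Q = (\<lambda>x. x i) ` Q'"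
proof (induction n)
  case 0
  show ?case
  proof (intro ballI allI impI)
    fix Q Q' i assume Q: "Q \<in> partQ K s T a (Suc 0)" and Q': "Q' \<in> partQ K s T a (Suc 0)"
      and ne: "(\<lambda>x. x i) ` Q \<inter> (\<lambda>x. x i) ` Q' \<noteq> {}"
    from Q have Qb: "Q \<in> base_part s T" using partQ_base by metis
    from Q' have Qb': "Q' \<in> base_part s T" using partQ_base by metis
    obtain Lc where L: "Q = Pi UNIV Lc" "\<forall>i. Lc i \<in> base_part_coord s T i" using base_decomp[OF Qb] by blast
    obtain Lc' where L': "Q' = Pi UNIV Lc'" "\<forall>i. Lc' i \<in> base_part_coord s T i" using base_decomp[OF Qb'] by blast
    have p: "(\<lambda>x. x i) ` Q = Lc i" unfolding L(1) by (rule proj_Pi) (use base_ne[OF Qb] L in blast)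
    have p': "(\<lambda>x. x i) ` Q' = Lc' i" unfolding L'(1) by (rule proj_Pi) (use base_ne[OF Qb'] L' in blast)
    show "(\<lambda>x. x i) ` Q = (\<lambda>x. x i) ` Q'" unfolding p p' using bpc_disj L(2) L'(2) ne p p' by metis
  qed
next
  case (Suc n)
  have prodIH: "\<forall>Q \<in> partQ K s T a (Suc n). \<exists>Qc. Q = Pi UNIV Qc" using partQ_prod by blast
  show ?case
  proof (intro ballI allI impI)
    fix A A' i assume A: "A \<in> partQ K s T a (Suc (Suc n))" and A': "A' \<in> partQ K s T a (Suc (Suc n))"
      and ne: "(\<lambda>x. x i) ` A \<inter> (\<lambda>x. x i) ` A' \<noteq> {}"
    obtain Q Qc Jc e where Q: "Q \<in> partQ K s T a (Suc n)" "Q = Pi UNIV Qc" "Q \<noteq> {}"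
      "\<forall>j. Jc j \<in> base_part_coord s T j" "\<forall>j k. e j k \<in> {0,1}" "\<forall>j. Qc j \<subseteq> {0..1}"
      "A = Pi UNIV (\<lambda>j. coordF K a j (e j) ` Qc j \<inter> Jc j)" "A \<noteq> {}"
      using step_desc[OF A prodIH] by blast
    obtain Q' Qc' Jc' e' where Q': "Q' \<in> partQ K s T a (Suc n)" "Q' = Pi UNIV Qc'" "Q' \<noteq> {}"
      "\<forall>j. Jc' j \<in> base_part_coord s T j" "\<forall>j k. e' j k \<in> {0,1}" "\<forall>j. Qc' j \<subseteq> {0..1}"
      "A' = Pi UNIV (\<lambda>j. coordF K a j (e' j) ` Qc' j \<inter> Jc' j)" "A' \<noteq> {}"
      using step_desc[OF A' prodIH] by blast
    define \<phi> where "\<phi> = coordF K a i (e i)"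
    define \<phi>' where "\<phi>' = coordF K a i (e' i)"
    have pA: "(\<lambda>x. x i) ` A = \<phi> ` Qc i \<inter> Jc i" unfolding \<phi>_def Q(7) by (rule proj_Pi) (use Q in simp)
    have pA': "(\<lambda>x. x i) ` A' = \<phi>' ` Qc' i \<inter> Jc' i" unfolding \<phi>'_def Q'(7) by (rule proj_Pi) (use Q' in simp)
    have pQ: "(\<lambda>x. x i) ` Q = Qc i" unfolding Q(2) by (rule proj_Pi) (use Q in simp)
    have pQ': "(\<lambda>x. x i) ` Q' = Qc' i" unfolding Q'(2) by (rule proj_Pi) (use Q' in simp)
    from ne obtain y u u' where y: "y \<in> Jc i" "y \<in> Jc' i" "u \<in> Qc i" "u' \<in> Qc' i" "y = \<phi> u" "y = \<phi>' u'"
      unfolding pA pA' by blast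
    have JJ: "Jc i = Jc' i" using bpc_disj Q(4) Q'(4) y(1,2) by blast
    have "\<phi> = \<phi>'"
    proof (rule ccontr)
      assume "\<phi> \<noteq> \<phi>'"
      then have "\<phi> ` {0..1} \<inter> \<phi>' ` {0..1} = {}" using inj Q(5) Q'(5)
        unfolding coordinatewise_injective_def \<phi>_def \<phi>'_def by blast
      moreover have "y \<in> \<phi> ` {0..1}" using y(3,5) Q(6) by blast
      moreover have "y \<in> \<phi>' ` {0..1}" using y(4,6) Q'(6) by blast
      ultimately show False by blast
    qed
    have "\<phi> ` Qc i = \<phi> ` Qc' i"
    proof (cases "a = 0")
      case True
      then have "\<forall>x. \<phi> x = \<phi> 0" unfolding \<phi>_def coordF_def by simp
      then have c: "\<phi> = (\<lambda>_. \<phi> 0)" by (intro ext) simp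
      have "(\<lambda>_. \<phi> 0) ` Qc i = {\<phi> 0}" using y(3) by (rule image_constant)
      moreover have "(\<lambda>_. \<phi> 0) ` Qc' i = {\<phi> 0}" using y(4) by (rule image_constant)
      ultimately show ?thesis using c by metis
    next
      case False
      have "\<phi> u = \<phi> u'" using y \<open>\<phi> = \<phi>'\<close> by simp
      then have "u = u'" using False unfolding \<phi>_def coordF_def by simp
      then have "(\<lambda>x. x i) ` Q \<inter> (\<lambda>x. x i) ` Q' \<noteq> {}" using pQ pQ' y by blast
      then have "(\<lambda>x. x i) ` Q = (\<lambda>x. x i) ` Q'" using Suc.IH Q(1) Q'(1) by blast
      then have "Qc i = Qc' i" using pQ pQ' by simp
      then show ?thesis by simp
    qed
    then show "(\<lambda>x. x i) ` A = (\<lambda>x. x i) ` A'" unfolding pA pA' JJ \<open>\<phi> = \<phi>'\<close>[symmetric] by simp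
  qed
qed

theorem mainTheorem6:
  fixes K s T :: "'n::finite \<Rightarrow> 'n \<Rightarrow> real" and a :: real and i :: 'n and t :: nat
  assumes "regulatory_network K s T a"
    and "coordinatewise_injective K a"
    and "t \<ge> 1"
    and "A \<in> partQ_coord K s T a t i" and "B \<in> partQ_coord K s T a t i" and "A \<noteq> B"
  shows "A \<inter> B = {}"
proof -
  obtain n where t: "t = Suc n" using assms(3) by (cases t) auto
  obtain Q where Q: "Q \<in> partQ K s T a t" "A = (\<lambda>x. x i) ` Q" using assms(4) unfolding partQ_coord_def by blast
  obtain Q' where Q': "Q' \<in> partQ K s T a t" "B = (\<lambda>x. x i) ` Q'" using assms(5) unfolding partQ_coord_def by blast
  show ?thesis using partQ_disj[OF assms(2), of s T n] Q Q' t assms(6) by blast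
qed

end
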